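(* Assume the setting of the context with $K\ge2$ temperatures, and assume $\rho$ is not constant on $S^K$. Let $\lambda>0$ and $h(\mathbf{x})=\lambda\rho(\mathbf{x})$. Then the optimal cost \[ \gamma^*=\min_{\nu\in\mathcal{P}(S^K)}\Big\{J(\nu)+\sum_{\mathbf{x}\in S^K}h(\mathbf{x})\nu(\mathbf{x})\Big\} \] satisfies $\gamma^*<\lambda/K!$; in particular, for two temperatures, $\gamma^*<\lambda/2$.
   Context: **Dynamics.** $S$ is a finite set and $K\ge2$. For $k=1,\dots,K$, $\Gamma^k$ is an irreducible intensity matrix on $S$, reversible with respect to its unique invariant distribution $\mu_k$. Set $\mu=\mu_1\times\cdots\times\mu_K$. **Permutations and weights.** $\Sigma_K$ is the set of permutations of $\{1,\dots,K\}$, and $\mathbf{x}^\sigma=(x_{\sigma^{-1}(1)},\dots,x_{\sigma^{-1}(K)})$. Define $\rho(\mathbf{x})=\mu(\mathbf{x})/\sum_{\sigma}\mu(\mathbf{x}^\sigma)$. **Infinite swapping rates.** - $\Gamma^\infty$ is the rate matrix on $S^K$ with $\Gamma^\infty_{\mathbf{x},\mathbf{y}}=\sum_\sigma\rho(\mathbf{x}^\sigma)\Gamma^{\sigma(i)}_{x_i,y_i}$ when $\mathbf{y}$ differs from $\mathbf{x}$ exactly in coordinate $i$. For $K=2$: $\Gamma^\infty_{(x_1,x_2),(y_1,x_2)}=\rho(x_1,x_2)\Gamma^1_{x_1,y_1}+\rho(x_2,x_1)\Gamma^2_{x_1,y_1}$, and analogously for the second coordinate. - Off-diagonal rates between states differing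 in two or more coordinates are $0$. - $q^\infty(\mathbf{x})=\sum_{\mathbf{y}\ne\mathbf{x}}\Gamma^\infty_{\mathbf{x},\mathbf{y}}$ and $\bar\mu(\mathbf{x})=\frac1{K!}\sum_\sigma\mu(\mathbf{x}^\sigma)$. **Functional.** For $\nu\in\mathcal{P}(S^K)$ with $\theta=\nu/\bar\mu$, \[ J(\nu)=\sum_{\mathbf{x}}q^\infty(\mathbf{x})\theta(\mathbf{x})\bar\mu(\mathbf{x})-\sum_{\mathbf{x}\ne\mathbf{y}}\theta^{1/2}(\mathbf{x})\theta^{1/2}(\mathbf{y})\Gamma^\infty_{\mathbf{x},\mathbf{y}}\bar\mu(\mathbf{x}). \] *)

theory Defs
  imports "HOL-Analysis.Analysis" "HOL-Combinatorics.Permutations"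
begin

text \<open>Temperatures are indexed by 0..<K (instead of 1..K). Configurations in S^K are
functions nat => 'a, extensional (undefined) outside {0..<K}.\<close>

definition states :: "nat \<Rightarrow> (nat \<Rightarrow> 'a) set" where
  "states K = PiE {0..<K} (\<lambda>_. UNIV)"

definition perms :: "nat \<Rightarrow> (nat \<Rightarrow> nat) set" where
  "perms K = {\<sigma>. \<sigma> permutes {0..<K}}"

definition perm_state :: "(nat \<Rightarrow> 'a) \<Rightarrow> (nat \<Rightarrow> nat) \<Rightarrow> (nat \<Rightarrow> 'a)" where
  "perm_state x \<sigma> = x \<circ> inv \<sigma>"

definition intensity_matrix :: "('a::finite \<Rightarrow> 'a \<Rightarrow> real) \<Rightarrow> bool" where
  "intensity_matrix G \<longleftrightarrow> (\<forall>x y. x \<noteq> y \<longrightarrow> G x y \<ge> 0) \<and> (\<forall>x. (\<Sum>y\<in>UNIV. G x y) = 0)"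

definition irreducible_rates :: "('a \<Rightarrow> 'a \<Rightarrow> real) \<Rightarrow> bool" where
  "irreducible_rates G \<longleftrightarrow> (\<forall>x y. (x, y) \<in> {(a, b). a \<noteq> b \<and> G a b > 0}\<^sup>*)"

definition distribution :: "('a::finite \<Rightarrow> real) \<Rightarrow> bool" where
  "distribution m \<longleftrightarrow> (\<forall>x. m x \<ge> 0) \<and> (\<Sum>x\<in>UNIV. m x) = 1"

definition invariant_distribution :: "('a::finite \<Rightarrow> 'a \<Rightarrow> real) \<Rightarrow> ('a \<Rightarrow> real) \<Rightarrow> bool" where
  "invariant_distribution G m \<longleftrightarrow> distribution m \<and> (\<forall>y. (\<Sum>x\<in>UNIV. m x * G x y) = 0)"

definition reversible :: "('a \<Rightarrow> 'a \<Rightarrow> real) \<Rightarrow> ('a \<Rightarrow> real) \<Rightarrow> bool" where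
  "reversible G m \<longleftrightarrow> (\<forall>x y. m x * G x y = m y * G y x)"

definition mu_prod :: "nat \<Rightarrow> (nat \<Rightarrow> 'a \<Rightarrow> real) \<Rightarrow> (nat \<Rightarrow> 'a) \<Rightarrow> real" where
  "mu_prod K mu x = (\<Prod>k<K. mu k (x k))"

definition rho :: "nat \<Rightarrow> (nat \<Rightarrow> 'a \<Rightarrow> real) \<Rightarrow> (nat \<Rightarrow> 'a) \<Rightarrow> real" where
  "rho K mu x = mu_prod K mu x / (\<Sum>\<sigma>\<in>perms K. mu_prod K mu (perm_state x \<sigma>))"

definition Ginf :: "nat \<Rightarrow> (nat \<Rightarrow> 'a \<Rightarrow> 'a \<Rightarrow> real) \<Rightarrow> (nat \<Rightarrow> 'a \<Rightarrow> real)
    \<Rightarrow> (nat \<Rightarrow> 'a) \<Rightarrow> (nat \<Rightarrow> 'a) \<Rightarrow> real" where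
  "Ginf K G mu x y = (\<Sum>i<K. if x i \<noteq> y i \<and> (\<forall>j<K. j \<noteq> i \<longrightarrow> x j = y j)
       then (\<Sum>\<sigma>\<in>perms K. rho K mu (perm_state x \<sigma>) * G (\<sigma> i) (x i) (y i)) else 0)"

definition qinf :: "nat \<Rightarrow> (nat \<Rightarrow> 'a \<Rightarrow> 'a \<Rightarrow> real) \<Rightarrow> (nat \<Rightarrow> 'a \<Rightarrow> real)
    \<Rightarrow> (nat \<Rightarrow> 'a) \<Rightarrow> real" where
  "qinf K G mu x = (\<Sum>y\<in>states K - {x}. Ginf K G mu x y)"

definition mubar :: "nat \<Rightarrow> (nat \<Rightarrow> 'a \<Rightarrow> real) \<Rightarrow> (nat \<Rightarrow> 'a) \<Rightarrow> real" where
  "mubar K mu x = (1 / fact K) * (\<Sum>\<sigma>\<in>perms K. mu_prod K mu (perm_state x \<sigma>))"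

definition prob_states :: "nat \<Rightarrow> ((nat \<Rightarrow> 'a) \<Rightarrow> real) set" where
  "prob_states K = {\<nu>. (\<forall>x\<in>states K. \<nu> x \<ge> 0) \<and> (\<Sum>x\<in>states K. \<nu> x) = 1}"

definition Jfun :: "nat \<Rightarrow> (nat \<Rightarrow> 'a \<Rightarrow> 'a \<Rightarrow> real) \<Rightarrow> (nat \<Rightarrow> 'a \<Rightarrow> real)
    \<Rightarrow> ((nat \<Rightarrow> 'a) \<Rightarrow> real) \<Rightarrow> real" where
  "Jfun K G mu \<nu> =
     (let \<theta> = (\<lambda>x. \<nu> x / mubar K mu x) in
      (\<Sum>x\<in>states K. qinf K G mu x * \<theta> x * mubar K mu x)
      - (\<Sum>x\<in>states K. \<Sum>y\<in>states K - {x}.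
           sqrt (\<theta> x) * sqrt (\<theta> y) * Ginf K G mu x y * mubar K mu x))"

end

theory Submission
  imports Defs
begin


lemma dist_pos:
  fixes G :: "'a::finite \<Rightarrow> 'a \<Rightarrow> real"
  assumes irr: "irreducible_rates G" and inv: "invariant_distribution G m" and rev: "reversible G m"
  shows "m a > 0"
proof -
  have nn: "\<And>x. m x \<ge> 0" and s1: "(\<Sum>x\<in>UNIV. m x) = 1"
    using inv unfolding invariant_distribution_def distribution_def by auto
  obtain b where b: "m b > 0"
  proof (rule ccontr)
    assume "\<not> thesis"
    with that have "\<forall>x. m x \<le> 0" by (meson not_le)
    hence "(\<Sum>x\<in>UNIV. m x) \<le> 0" by (simp add: sum_nonpos)
    with s1 show False by simp
  qed
  have "(b, a) \<in> {(a, b). a \<noteq> b \<and> G a b > 0}\<^sup>*" using irr unfolding irreducible_rates_def by blast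
  then show ?thesis
  proof (induction rule: rtrancl_induct)
    case base then show ?case using b .
  next
    case (step y z)
    have "m z * G z y = m y * G y z" using rev unfolding reversible_def by blast
    moreover have "m y * G y z > 0" using step by auto
    ultimately have "m z \<noteq> 0" by auto
    with nn[of z] show ?case by linarith
  qed
qed

lemma perm_state_in:
  assumes "\<sigma> permutes {0..<K}" "x \<in> states K"
  shows "perm_state x \<sigma> \<in> states K"
proof -
  have pi: "inv \<sigma> permutes {0..<K}" using assms(1) by (rule permutes_inv)
  show ?thesis using assms(2) permutes_not_in[OF pi]
    unfolding states_def perm_state_def PiE_def extensional_def by auto
qed

lemma perm_state_comp:
  assumes "\<sigma> permutes {0..<K}" "\<tau> permutes {0..<K}"
  shows "perm_state (perm_state x \<sigma>) \<tau> = perm_state x (\<tau> \<circ> \<sigma>)"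
  using assms unfolding perm_state_def
  by (simp add: o_assoc o_inv_distrib permutes_bij)

lemma perm_state_id: "perm_state x id = x"
  unfolding perm_state_def by simp

lemma sum_perm_state:
  fixes F :: "(nat \<Rightarrow> 'a) \<Rightarrow> 'b::comm_monoid_add"
  assumes "\<sigma> permutes {0..<K}"
  shows "(\<Sum>x\<in>states K. F (perm_state x \<sigma>)) = (\<Sum>x\<in>states K. F x)"
proof (rule sum.reindex_bij_witness[where i="\<lambda>x. perm_state x (inv \<sigma>)" and j="\<lambda>x. perm_state x \<sigma>"])
  have pi: "inv \<sigma> permutes {0..<K}" using assms by (rule permutes_inv)
  fix a :: "nat \<Rightarrow> 'a" assume a: "a \<in> states K"
  show "perm_state (perm_state a \<sigma>) (inv \<sigma>) = a"
    using perm_state_comp[OF assms pi] permutes_inv_o(2)[OF assms] perm_state_id by metis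
  show "perm_state (perm_state a (inv \<sigma>)) \<sigma> = a"
    using perm_state_comp[OF pi assms] permutes_inv_o(1)[OF assms] perm_state_id by metis
  show "perm_state a (inv \<sigma>) \<in> states K" using perm_state_in[OF pi a] .
  show "perm_state a \<sigma> \<in> states K" using perm_state_in[OF assms a] .
  show "F (perm_state a \<sigma>) = F (perm_state a \<sigma>)" by simp
qed

lemma sum_mu_prod:
  fixes mu :: "nat \<Rightarrow> 'a::finite \<Rightarrow> real"
  assumes "\<forall>k<K. (\<Sum>a\<in>UNIV. mu k a) = 1"
  shows "(\<Sum>x\<in>states K. mu_prod K mu x) = 1"
proof -
  have "(\<Prod>k\<in>{0..<K}. \<Sum>a\<in>UNIV. mu k a) = (\<Sum>g\<in>states K. \<Prod>k\<in>{0..<K}. mu k (g k))"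
    unfolding states_def by (rule prod_sum_PiE) auto
  moreover have "(\<Prod>k\<in>{0..<K}. \<Sum>a\<in>UNIV. mu k a) = 1" using assms by simp
  ultimately show ?thesis unfolding mu_prod_def by (simp add: atLeast0LessThan)
qed

lemma denom_perm:
  fixes x :: "nat \<Rightarrow> 'a"
  assumes "\<sigma> permutes {0..<K}"
  shows "(\<Sum>\<tau>\<in>perms K. mu_prod K mu (perm_state (perm_state x \<sigma>) \<tau>))
       = (\<Sum>\<tau>\<in>perms K. mu_prod K mu (perm_state x \<tau>))"
proof (rule sum.reindex_bij_witness[where i="\<lambda>\<tau>. \<tau> \<circ> inv \<sigma>" and j="\<lambda>\<tau>. \<tau> \<circ> \<sigma>"])
  have pi: "inv \<sigma> permutes {0..<K}" using assms by (rule permutes_inv)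
  fix a :: "nat \<Rightarrow> nat" assume a: "a \<in> perms K"
  hence ap: "a permutes {0..<K}" unfolding perms_def by simp
  show "a \<circ> \<sigma> \<circ> inv \<sigma> = a" using permutes_inv_o(1)[OF assms] by (simp add: o_assoc[symmetric])
  show "a \<circ> inv \<sigma> \<circ> \<sigma> = a" using permutes_inv_o(2)[OF assms] by (simp add: o_assoc[symmetric])
  show "a \<circ> inv \<sigma> \<in> perms K" using permutes_compose[OF pi ap] unfolding perms_def by simp
  show "a \<circ> \<sigma> \<in> perms K" using permutes_compose[OF assms ap] unfolding perms_def by simp
  show "mu_prod K mu (perm_state x (a \<circ> \<sigma>)) = mu_prod K mu (perm_state (perm_state x \<sigma>) a)"
    by (simp add: perm_state_comp[OF assms ap])
qed

lemma id_perms: "id \<in> perms K" unfolding perms_def by (simp add: permutes_id)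
lemma finite_perms: "finite (perms K)" unfolding perms_def by (simp add: finite_permutations)
lemma card_perms: "card (perms K) = fact K"
  unfolding perms_def using card_permutations[of "{0..<K}" K] by simp

lemma mu_prod_pos:
  assumes "\<forall>k<K. \<forall>a. mu k a > 0"
  shows "mu_prod K mu x > 0"
  unfolding mu_prod_def using assms by (intro prod_pos) auto

lemma denom_pos:
  assumes "\<forall>k<K. \<forall>a. mu k a > 0"
  shows "(\<Sum>\<sigma>\<in>perms K. mu_prod K mu (perm_state x \<sigma>)) > 0"
  using mu_prod_pos[OF assms] finite_perms id_perms
  by (intro sum_pos) auto

lemma mubar_pos:
  assumes "\<forall>k<K. \<forall>a. mu k a > 0"
  shows "mubar K mu x > 0"
  unfolding mubar_def using denom_pos[OF assms] by simp

lemma mubar_rho: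
  assumes "\<forall>k<K. \<forall>a. mu k a > 0" and "\<sigma> \<in> perms K"
  shows "mubar K mu x * rho K mu (perm_state x \<sigma>) = mu_prod K mu (perm_state x \<sigma>) / fact K"
proof -
  have sp: "\<sigma> permutes {0..<K}" using assms(2) unfolding perms_def by simp
  have d: "(\<Sum>\<tau>\<in>perms K. mu_prod K mu (perm_state (perm_state x \<sigma>) \<tau>))
       = (\<Sum>\<tau>\<in>perms K. mu_prod K mu (perm_state x \<tau>))" by (rule denom_perm[OF sp])
  have p: "(\<Sum>\<tau>\<in>perms K. mu_prod K mu (perm_state x \<tau>)) > 0" by (rule denom_pos[OF assms(1)])
  show ?thesis unfolding mubar_def rho_def d using p by (simp add: field_simps)
qed

lemma key_swap:
  assumes rev: "\<forall>k<K. reversible (G k) (mu k)"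
    and i: "i < K" and eq: "\<forall>j<K. j \<noteq> i \<longrightarrow> x j = y j" and sp: "\<sigma> permutes {0..<K}"
  shows "mu_prod K mu (perm_state x \<sigma>) * G (\<sigma> i) (x i) (y i)
       = mu_prod K mu (perm_state y \<sigma>) * G (\<sigma> i) (y i) (x i)"
proof -
  have si: "\<sigma> i \<in> {..<K}" using permutes_in_image[OF sp] i by auto
  have ii: "inv \<sigma> (\<sigma> i) = i" using permutes_inverses(2)[OF sp] by simp
  have pi: "inv \<sigma> permutes {0..<K}" using sp by (rule permutes_inv)
  have split: "\<And>z. mu_prod K mu (perm_state z \<sigma>) = mu (\<sigma> i) (z i) * (\<Prod>k\<in>{..<K}-{\<sigma> i}. mu k (z (inv \<sigma> k)))"
    unfolding mu_prod_def perm_state_def using prod.remove[OF _ si, of "\<lambda>k. mu k (z (inv \<sigma> k))" for z] ii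
    by simp
  have rest: "(\<Prod>k\<in>{..<K}-{\<sigma> i}. mu k (x (inv \<sigma> k))) = (\<Prod>k\<in>{..<K}-{\<sigma> i}. mu k (y (inv \<sigma> k)))"
  proof (rule prod.cong)
    fix k assume k: "k \<in> {..<K}-{\<sigma> i}"
    have "inv \<sigma> k < K" using permutes_in_image[OF pi] k by auto
    moreover have "inv \<sigma> k \<noteq> i" using k permutes_inverses(1)[OF sp, of k] by auto
    ultimately show "mu k (x (inv \<sigma> k)) = mu k (y (inv \<sigma> k))" using eq by simp
  qed simp
  have r: "mu (\<sigma> i) (x i) * G (\<sigma> i) (x i) (y i) = mu (\<sigma> i) (y i) * G (\<sigma> i) (y i) (x i)"
    using rev si unfolding reversible_def by auto
  show ?thesis unfolding split rest using r
    by (metis (no_types, lifting) mult.assoc mult.commute)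
qed

lemma Ginf_sym:
  assumes mupos: "\<forall>k<K. \<forall>a. mu k a > 0" and rev: "\<forall>k<K. reversible (G k) (mu k)"
  shows "mubar K mu x * Ginf K G mu x y = mubar K mu y * Ginf K G mu y x"
proof -
  have e: "\<And>x y. mubar K mu x * Ginf K G mu x y = (\<Sum>i<K. if x i \<noteq> y i \<and> (\<forall>j<K. j \<noteq> i \<longrightarrow> x j = y j)
       then (\<Sum>\<sigma>\<in>perms K. mu_prod K mu (perm_state x \<sigma>) / fact K * G (\<sigma> i) (x i) (y i)) else 0)"
  proof -
    fix x y :: "nat \<Rightarrow> 'a"
    show "?thesis x y"
      unfolding Ginf_def sum_distrib_left
    proof (rule sum.cong)
      fix i assume "i \<in> {..<K}"
      show "mubar K mu x * (if x i \<noteq> y i \<and> (\<forall>j<K. j \<noteq> i \<longrightarrow> x j = y j)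
       then (\<Sum>\<sigma>\<in>perms K. rho K mu (perm_state x \<sigma>) * G (\<sigma> i) (x i) (y i)) else 0)
       = (if x i \<noteq> y i \<and> (\<forall>j<K. j \<noteq> i \<longrightarrow> x j = y j)
       then (\<Sum>\<sigma>\<in>perms K. mu_prod K mu (perm_state x \<sigma>) / fact K * G (\<sigma> i) (x i) (y i)) else 0)"
        using mubar_rho[OF mupos] by (auto simp add: sum_distrib_left mult.assoc[symmetric])
    qed simp
  qed
  show ?thesis unfolding e
  proof (rule sum.cong)
    fix i assume i: "i \<in> {..<K}"
    show "(if x i \<noteq> y i \<and> (\<forall>j<K. j \<noteq> i \<longrightarrow> x j = y j)
       then (\<Sum>\<sigma>\<in>perms K. mu_prod K mu (perm_state x \<sigma>) / fact K * G (\<sigma> i) (x i) (y i)) else 0)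
      = (if y i \<noteq> x i \<and> (\<forall>j<K. j \<noteq> i \<longrightarrow> y j = x j)
       then (\<Sum>\<sigma>\<in>perms K. mu_prod K mu (perm_state y \<sigma>) / fact K * G (\<sigma> i) (y i) (x i)) else 0)"
    proof (cases "x i \<noteq> y i \<and> (\<forall>j<K. j \<noteq> i \<longrightarrow> x j = y j)")
      case True
      have "(\<Sum>\<sigma>\<in>perms K. mu_prod K mu (perm_state x \<sigma>) / fact K * G (\<sigma> i) (x i) (y i))
          = (\<Sum>\<sigma>\<in>perms K. mu_prod K mu (perm_state y \<sigma>) / fact K * G (\<sigma> i) (y i) (x i))"
      proof (rule sum.cong)
        fix \<sigma> assume "\<sigma> \<in> perms K"
        hence sp: "\<sigma> permutes {0..<K}" unfolding perms_def by simp
        have "mu_prod K mu (perm_state x \<sigma>) * G (\<sigma> i) (x i) (y i)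
       = mu_prod K mu (perm_state y \<sigma>) * G (\<sigma> i) (y i) (x i)"
          using key_swap[OF rev _ _ sp] i True by auto
        then show "mu_prod K mu (perm_state x \<sigma>) / fact K * G (\<sigma> i) (x i) (y i)
          = mu_prod K mu (perm_state y \<sigma>) / fact K * G (\<sigma> i) (y i) (x i)"
          by (simp add: field_simps)
      qed simp
      with True show ?thesis by auto
    next
      case False
      then have c2: "\<not> (y i \<noteq> x i \<and> (\<forall>j<K. j \<noteq> i \<longrightarrow> y j = x j))" by auto
      show ?thesis by (simp only: if_not_P[OF False] if_not_P[OF c2])
    qed
  qed simp
qed

lemma in_sum:
  assumes mupos: "\<forall>k<K. \<forall>a. mu k a > 0" and rev: "\<forall>k<K. reversible (G k) (mu k)"
  shows "(\<Sum>x\<in>states K - {z}. mubar K mu x * Ginf K G mu x z) = mubar K mu z * qinf K G mu z"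
  unfolding qinf_def sum_distrib_left using Ginf_sym[OF mupos rev] by simp

lemma sum_mubar:
  fixes mu :: "nat \<Rightarrow> 'a::finite \<Rightarrow> real"
  assumes "\<forall>k<K. (\<Sum>a\<in>UNIV. mu k a) = 1"
  shows "(\<Sum>x\<in>states K. mubar K mu x) = 1"
proof -
  have "(\<Sum>x\<in>states K. mubar K mu x) = 1 / fact K * (\<Sum>\<sigma>\<in>perms K. \<Sum>x\<in>states K. mu_prod K mu (perm_state x \<sigma>))"
    unfolding mubar_def by (subst sum.swap) (simp add: sum_divide_distrib)
  also have "\<dots> = 1 / fact K * (\<Sum>\<sigma>\<in>perms K. 1)"
    using sum_perm_state[of _ K "mu_prod K mu"] sum_mu_prod[OF assms] unfolding perms_def by simp
  also have "\<dots> = 1" using card_perms[of K] by simp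
  finally show ?thesis .
qed

lemma sum_rho_mubar:
  fixes mu :: "nat \<Rightarrow> 'a::finite \<Rightarrow> real"
  assumes "\<forall>k<K. (\<Sum>a\<in>UNIV. mu k a) = 1" and mupos: "\<forall>k<K. \<forall>a. mu k a > 0"
  shows "(\<Sum>x\<in>states K. rho K mu x * mubar K mu x) = 1 / fact K"
proof -
  have "\<And>x. rho K mu x * mubar K mu x = mu_prod K mu x / fact K"
    using mubar_rho[OF mupos id_perms] perm_state_id by (metis mult.commute)
  then show ?thesis using sum_mu_prod[OF assms(1)] by (simp add: sum_divide_distrib[symmetric])
qed


lemma sum_if_neq: "finite A \<Longrightarrow> (\<Sum>x\<in>A. if x \<noteq> z then g x else 0) = (\<Sum>x\<in>A-{z}. (g x::real))"
  by (simp add: sum.If_cases Diff_eq) (rule sum.cong; auto)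

lemma choose_t:
  fixes q c :: real
  assumes "c \<noteq> 0"
  obtains t where "t > -1" "t\<^sup>2 * (q + c) + 2 * t * c < 0"
proof -
  define e where "e = min (1/2) (\<bar>c\<bar> / (\<bar>q + c\<bar> + 1))"
  have e0: "e > 0" unfolding e_def using assms by simp
  have e1: "e \<le> 1/2" unfolding e_def by (rule min.cobounded1)
  have e2: "e * (\<bar>q + c\<bar> + 1) \<le> \<bar>c\<bar>"
  proof -
    have "e \<le> \<bar>c\<bar> / (\<bar>q + c\<bar> + 1)" unfolding e_def by (rule min.cobounded2)
    moreover have "\<bar>q + c\<bar> + 1 > 0" by (smt (verit) abs_ge_zero)
    ultimately show ?thesis by (simp add: pos_le_divide_eq)
  qed
  define t where "t = (if c > 0 then - e else e)"
  have tt: "t\<^sup>2 = e\<^sup>2" unfolding t_def by simp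
  have tc: "t * c = - e * \<bar>c\<bar>" unfolding t_def using assms by (auto simp: abs_if)
  have "t\<^sup>2 * (q + c) \<le> e\<^sup>2 * \<bar>q + c\<bar>" unfolding tt
    by (rule mult_left_mono) auto
  also have "\<dots> = e * (e * \<bar>q + c\<bar>)" by (simp add: power2_eq_square)
  also have "\<dots> \<le> e * (\<bar>c\<bar> - e)" using e2 e0
    by (intro mult_left_mono) (auto simp: algebra_simps)
  also have "\<dots> < 2 * e * \<bar>c\<bar>" using e0 assms
    by (simp add: algebra_simps) (simp add: add_pos_pos)
  also have "\<dots> = - 2 * t * c" by (simp only: mult.assoc tc)
  finally have "t\<^sup>2 * (q + c) + 2 * t * c < 0" by simp
  moreover have "t > -1" unfolding t_def using e1 e0 by auto
  ultimately show ?thesis using that by blast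
qed


theorem lemmaA2:
  fixes K :: nat
    and G :: "nat \<Rightarrow> 'a::finite \<Rightarrow> 'a \<Rightarrow> real"
    and mu :: "nat \<Rightarrow> 'a \<Rightarrow> real"
    and lam :: real
  assumes K2: "K \<ge> 2"
    and intens: "\<forall>k<K. intensity_matrix (G k)"
    and irred: "\<forall>k<K. irreducible_rates (G k)"
    and inv: "\<forall>k<K. invariant_distribution (G k) (mu k)"
    and uniq: "\<forall>k<K. \<forall>m. invariant_distribution (G k) m \<longrightarrow> m = mu k"
    and rev: "\<forall>k<K. reversible (G k) (mu k)"
    and nonconst: "\<exists>x\<in>states K. \<exists>y\<in>states K. rho K mu x \<noteq> rho K mu y"
    and lam_pos: "lam > 0"
  shows "(INF \<nu>\<in>prob_states K. Jfun K G mu \<nu> + (\<Sum>x\<in>states K. lam * rho K mu x * \<nu> x))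
           < lam / fact K"
proof -
  have mupos: "\<forall>k<K. \<forall>a. mu k a > 0"
    using dist_pos irred inv rev by blast
  have msum: "\<forall>k<K. (\<Sum>a\<in>UNIV. mu k a) = 1"
    using inv unfolding invariant_distribution_def distribution_def by blast
  have fin: "finite (states K :: (nat \<Rightarrow> 'a) set)" unfolding states_def by (intro finite_PiE) auto
  let ?mb = "mubar K mu"
  let ?rho = "rho K mu"
  let ?q = "qinf K G mu"
  let ?G = "Ginf K G mu"
  define F where "F \<nu> = Jfun K G mu \<nu> + (\<Sum>x\<in>states K. lam * ?rho x * \<nu> x)" for \<nu>
  have mbpos: "\<And>x. ?mb x > 0" using mubar_pos[OF mupos] .
  define B where "B = (\<Sum>x\<in>states K. \<bar>?q x\<bar>)
     + (\<Sum>x\<in>states K. \<Sum>y\<in>states K - {x}. sqrt (1 / ?mb x) * sqrt (1 / ?mb y) * \<bar>?G x y\<bar> * ?mb x)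
     + (\<Sum>x\<in>states K. lam * \<bar>?rho x\<bar>)"
  have bdd: "bdd_below (F ` prob_states K)"
  proof (rule bdd_belowI2[where m="- B"])
    fix \<nu> :: "(nat \<Rightarrow> 'a) \<Rightarrow> real" assume \<nu>: "\<nu> \<in> prob_states K"
    have nn: "\<And>x. x \<in> states K \<Longrightarrow> \<nu> x \<ge> 0" and s1: "(\<Sum>x\<in>states K. \<nu> x) = 1"
      using \<nu> unfolding prob_states_def by auto
    have le1: "\<And>x. x \<in> states K \<Longrightarrow> \<nu> x \<le> 1"
      using member_le_sum[of _ "states K" \<nu>] nn fin s1 by fastforce
    define \<theta> where "\<theta> x = \<nu> x / ?mb x" for x :: "nat \<Rightarrow> 'a"
    have th0: "\<And>x. x \<in> states K \<Longrightarrow> \<theta> x \<ge> 0" unfolding \<theta>_def using nn mbpos by (simp add: divide_nonneg_pos)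
    have th1: "\<And>x. x \<in> states K \<Longrightarrow> \<theta> x \<le> 1 / ?mb x" unfolding \<theta>_def using le1 mbpos
      by (simp add: divide_right_mono less_imp_le)
    have a: "(\<Sum>x\<in>states K. ?q x * \<theta> x * ?mb x) \<ge> - (\<Sum>x\<in>states K. \<bar>?q x\<bar>)"
    proof -
      have "(\<Sum>x\<in>states K. - \<bar>?q x\<bar>) \<le> (\<Sum>x\<in>states K. ?q x * \<theta> x * ?mb x)"
      proof (rule sum_mono)
        fix x :: "nat \<Rightarrow> 'a" assume x: "x \<in> states K"
        have "?q x * \<theta> x * ?mb x = ?q x * \<nu> x" unfolding \<theta>_def using mbpos[of x] by simp
        moreover have "\<bar>?q x * \<nu> x\<bar> \<le> \<bar>?q x\<bar>"
          using nn[OF x] le1[OF x] by (simp add: abs_mult mult_left_le)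
        ultimately show "- \<bar>?q x\<bar> \<le> ?q x * \<theta> x * ?mb x" by linarith
      qed
      then show ?thesis by (simp add: sum_negf)
    qed
    have b: "(\<Sum>x\<in>states K. \<Sum>y\<in>states K - {x}. sqrt (\<theta> x) * sqrt (\<theta> y) * ?G x y * ?mb x)
       \<le> (\<Sum>x\<in>states K. \<Sum>y\<in>states K - {x}. sqrt (1 / ?mb x) * sqrt (1 / ?mb y) * \<bar>?G x y\<bar> * ?mb x)"
    proof (intro sum_mono)
      fix x y :: "nat \<Rightarrow> 'a" assume x: "x \<in> states K" and y: "y \<in> states K - {x}"
      have sx: "0 \<le> sqrt (\<theta> x)" "sqrt (\<theta> x) \<le> sqrt (1 / ?mb x)" using th0[OF x] th1[OF x] by auto
      have sy: "0 \<le> sqrt (\<theta> y)" "sqrt (\<theta> y) \<le> sqrt (1 / ?mb y)" using th0 th1 y by auto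
      have p: "sqrt (\<theta> x) * sqrt (\<theta> y) \<le> sqrt (1 / ?mb x) * sqrt (1 / ?mb y)"
        using sx sy mbpos[of x] by (intro mult_mono) (auto simp: less_imp_le)
      have "sqrt (\<theta> x) * sqrt (\<theta> y) * ?G x y * ?mb x \<le> sqrt (\<theta> x) * sqrt (\<theta> y) * \<bar>?G x y\<bar> * ?mb x"
        using sx(1) sy(1) mbpos[of x]
        by (intro mult_right_mono mult_left_mono) auto
      also have "\<dots> \<le> sqrt (1 / ?mb x) * sqrt (1 / ?mb y) * \<bar>?G x y\<bar> * ?mb x"
        using p mbpos[of x] by (intro mult_right_mono) auto
      finally show "sqrt (\<theta> x) * sqrt (\<theta> y) * ?G x y * ?mb x \<le> sqrt (1 / ?mb x) * sqrt (1 / ?mb y) * \<bar>?G x y\<bar> * ?mb x" .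
    qed
    have c: "(\<Sum>x\<in>states K. lam * ?rho x * \<nu> x) \<ge> - (\<Sum>x\<in>states K. lam * \<bar>?rho x\<bar>)"
    proof -
      have "(\<Sum>x\<in>states K. - (lam * \<bar>?rho x\<bar>)) \<le> (\<Sum>x\<in>states K. lam * ?rho x * \<nu> x)"
      proof (rule sum_mono)
        fix x :: "nat \<Rightarrow> 'a" assume x: "x \<in> states K"
        have "\<bar>lam * ?rho x * \<nu> x\<bar> \<le> lam * \<bar>?rho x\<bar>"
          using nn[OF x] le1[OF x] lam_pos by (simp add: abs_mult mult_left_le)
        then show "- (lam * \<bar>?rho x\<bar>) \<le> lam * ?rho x * \<nu> x" by linarith
      qed
      then show ?thesis by (simp add: sum_negf)
    qed
    have "F \<nu> = (\<Sum>x\<in>states K. ?q x * \<theta> x * ?mb x)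
       - (\<Sum>x\<in>states K. \<Sum>y\<in>states K - {x}. sqrt (\<theta> x) * sqrt (\<theta> y) * ?G x y * ?mb x)
       + (\<Sum>x\<in>states K. lam * ?rho x * \<nu> x)"
      unfolding F_def Jfun_def \<theta>_def Let_def by simp
    then show "- B \<le> F \<nu>" using a b c unfolding B_def by linarith
  qed
  obtain z where z: "z \<in> states K" and rz: "?rho z \<noteq> 1 / fact K"
    using nonconst by metis
  define m where "m = ?mb z"
  define q where "q = ?q z"
  define c where "c = lam * (?rho z - 1 / fact K)"
  have m0: "m > 0" unfolding m_def using mbpos .
  have sm: "(\<Sum>x\<in>states K. ?mb x) = 1" by (rule sum_mubar[OF msum])
  have m1: "m \<le> 1" unfolding m_def using member_le_sum[of z "states K" ?mb] z fin mbpos sm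
    by (simp add: less_imp_le)
  have c0: "c \<noteq> 0" unfolding c_def using rz lam_pos by simp
  obtain t where t1: "t > -1" and tneg: "t\<^sup>2 * (q + c) + 2 * t * c < 0"
    using choose_t[OF c0] by blast
  define s where "s = 1 + t"
  have s0: "s > 0" unfolding s_def using t1 by simp
  define Z where "Z = 1 + (s\<^sup>2 - 1) * m"
  have Z0: "Z > 0"
  proof -
    have "Z = (1 - m) + s\<^sup>2 * m" unfolding Z_def by (simp add: algebra_simps)
    moreover have "s\<^sup>2 * m > 0" using s0 m0 by simp
    ultimately show ?thesis using m1 by linarith
  qed
  define f where "f x = (if x = z then s else 1)" for x :: "nat \<Rightarrow> 'a"
  have f0: "\<And>x. f x > 0" unfolding f_def using s0 by simp
  define \<nu> where "\<nu> x = f x ^ 2 * ?mb x / Z" for x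
  have fmb: "\<And>x. f x ^ 2 * ?mb x = ?mb x + (if x = z then (s\<^sup>2 - 1) * m else 0)"
    by (case_tac "x = z") (simp_all add: f_def m_def algebra_simps)
  have sumf: "(\<Sum>x\<in>states K. f x ^ 2 * ?mb x) = Z"
    unfolding fmb sum.distrib Z_def using sm fin z by (simp add: sum.delta)
  have \<nu>P: "\<nu> \<in> prob_states K"
    unfolding prob_states_def
  proof safe
    fix x :: "nat \<Rightarrow> 'a" assume "x \<in> states K"
    show "0 \<le> \<nu> x" unfolding \<nu>_def using Z0 mbpos[of x] by (simp add: less_imp_le)
  next
    show "(\<Sum>x\<in>states K. \<nu> x) = 1" unfolding \<nu>_def using sumf Z0
      by (simp add: sum_divide_distrib[symmetric])
  qed
  define \<theta> where "\<theta> x = \<nu> x / ?mb x" for x :: "nat \<Rightarrow> 'a"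
  have th: "\<And>x. \<theta> x = f x ^ 2 / Z"
  proof -
    fix x :: "nat \<Rightarrow> 'a"
    have "?mb x \<noteq> 0" using mbpos[of x] by simp
    then show "\<theta> x = f x ^ 2 / Z" unfolding \<theta>_def \<nu>_def by simp
  qed
  have sq: "\<And>x. sqrt (\<theta> x) = f x / sqrt Z"
    unfolding th using f0 by (simp add: real_sqrt_divide less_imp_le)
  have sqZ: "sqrt Z * sqrt Z = Z" using Z0 by simp
  have ta: "\<And>x. ?q x * \<theta> x * ?mb x = (?q x * ?mb x + (if x = z then (s\<^sup>2 - 1) * q * m else 0)) / Z"
    using Z0 by (case_tac "x = z") (simp_all add: th f_def q_def m_def field_simps)
  have tb: "\<And>x y. x \<noteq> y \<Longrightarrow> sqrt (\<theta> x) * sqrt (\<theta> y) * ?G x y * ?mb x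
      = (?G x y * ?mb x + (if x = z then (s - 1) * (?G z y * m) else 0)
          + (if y = z then (s - 1) * (?mb x * ?G x z) else 0)) / Z"
  proof -
    fix x y :: "nat \<Rightarrow> 'a" assume xy: "x \<noteq> y"
    have "sqrt (\<theta> x) * sqrt (\<theta> y) = f x * f y / Z" unfolding sq using sqZ Z0
      by (simp add: field_simps)
    then show "?thesis x y" using xy Z0 by (cases "x = z"; cases "y = z") (simp_all add: f_def m_def field_simps)
  qed
  have tc: "\<And>x. lam * ?rho x * \<nu> x = lam * (?rho x * ?mb x + (if x = z then (s\<^sup>2 - 1) * ?rho z * m else 0)) / Z"
    using Z0 by (case_tac "x = z") (simp_all add: \<nu>_def f_def m_def field_simps)
  have SA: "(\<Sum>x\<in>states K. ?q x * \<theta> x * ?mb x) = ((\<Sum>x\<in>states K. ?q x * ?mb x) + (s\<^sup>2 - 1) * q * m) / Z"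
    unfolding ta sum_divide_distrib[symmetric] sum.distrib using fin z by (simp add: sum.delta)
  have inner: "\<And>x. x \<in> states K \<Longrightarrow> (\<Sum>y\<in>states K - {x}. sqrt (\<theta> x) * sqrt (\<theta> y) * ?G x y * ?mb x)
      = ((\<Sum>y\<in>states K - {x}. ?G x y * ?mb x) + (if x = z then (s - 1) * (?q z * m) else 0)
          + (if x \<noteq> z then (s - 1) * (?mb x * ?G x z) else 0)) / Z"
  proof -
    fix x :: "nat \<Rightarrow> 'a" assume x: "x \<in> states K"
    have "(\<Sum>y\<in>states K - {x}. sqrt (\<theta> x) * sqrt (\<theta> y) * ?G x y * ?mb x)
       = (\<Sum>y\<in>states K - {x}. (?G x y * ?mb x + (if x = z then (s - 1) * (?G z y * m) else 0)
          + (if y = z then (s - 1) * (?mb x * ?G x z) else 0)) / Z)"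
      by (rule sum.cong) (auto simp: tb)
    also have "\<dots> = ((\<Sum>y\<in>states K - {x}. ?G x y * ?mb x) + (\<Sum>y\<in>states K - {x}. (if x = z then (s - 1) * (?G z y * m) else 0))
          + (\<Sum>y\<in>states K - {x}. (if y = z then (s - 1) * (?mb x * ?G x z) else 0))) / Z"
      by (simp add: sum_divide_distrib[symmetric] sum.distrib)
    also have "(\<Sum>y\<in>states K - {x}. (if x = z then (s - 1) * (?G z y * m) else 0))
        = (if x = z then (s - 1) * (?q z * m) else 0)"
      unfolding qinf_def by (simp add: sum_distrib_left sum_distrib_right mult.assoc)
    also have "(\<Sum>y\<in>states K - {x}. (if y = z then (s - 1) * (?mb x * ?G x z) else 0))
        = (if x \<noteq> z then (s - 1) * (?mb x * ?G x z) else 0)"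
      using fin z by (simp add: sum.delta)
    finally show "?thesis x" .
  qed
  have SB: "(\<Sum>x\<in>states K. \<Sum>y\<in>states K - {x}. sqrt (\<theta> x) * sqrt (\<theta> y) * ?G x y * ?mb x)
     = ((\<Sum>x\<in>states K. ?q x * ?mb x) + 2 * (s - 1) * q * m) / Z"
  proof -
    have "(\<Sum>x\<in>states K. \<Sum>y\<in>states K - {x}. sqrt (\<theta> x) * sqrt (\<theta> y) * ?G x y * ?mb x)
      = (\<Sum>x\<in>states K. ((\<Sum>y\<in>states K - {x}. ?G x y * ?mb x) + (if x = z then (s - 1) * (?q z * m) else 0)
          + (if x \<noteq> z then (s - 1) * (?mb x * ?G x z) else 0)) / Z)"
      by (rule sum.cong) (auto simp: inner)
    also have "\<dots> = ((\<Sum>x\<in>states K. \<Sum>y\<in>states K - {x}. ?G x y * ?mb x)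
        + (\<Sum>x\<in>states K. if x = z then (s - 1) * (?q z * m) else 0)
        + (\<Sum>x\<in>states K. if x \<noteq> z then (s - 1) * (?mb x * ?G x z) else 0)) / Z"
      by (simp add: sum_divide_distrib[symmetric] sum.distrib)
    also have "(\<Sum>x\<in>states K. \<Sum>y\<in>states K - {x}. ?G x y * ?mb x) = (\<Sum>x\<in>states K. ?q x * ?mb x)"
      unfolding qinf_def by (simp add: sum_distrib_right)
    also have "(\<Sum>x\<in>states K. if x = z then (s - 1) * (?q z * m) else 0) = (s - 1) * (q * m)"
      using fin z unfolding q_def by (simp add: sum.delta)
    also have "(\<Sum>x\<in>states K. if x \<noteq> z then (s - 1) * (?mb x * ?G x z) else 0)
        = (\<Sum>x\<in>states K - {z}. (s - 1) * (?mb x * ?G x z))"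
      by (rule sum_if_neq[OF fin])
    also have "\<dots> = (s - 1) * (q * m)"
      unfolding sum_distrib_left[symmetric] in_sum[OF mupos rev] q_def m_def by simp
    finally show ?thesis by (simp add: algebra_simps)
  qed
  have SC: "(\<Sum>x\<in>states K. lam * ?rho x * \<nu> x) = lam * (1 / fact K + (s\<^sup>2 - 1) * ?rho z * m) / Z"
    unfolding tc sum_divide_distrib[symmetric] sum_distrib_left[symmetric] sum.distrib
    using fin z sum_rho_mubar[OF msum mupos] by (simp add: sum.delta)
  have Fv: "F \<nu> = ((s\<^sup>2 - 1) * q * m - 2 * (s - 1) * q * m + lam * (1 / fact K + (s\<^sup>2 - 1) * ?rho z * m)) / Z"
  proof -
    have "F \<nu> = (\<Sum>x\<in>states K. ?q x * \<theta> x * ?mb x)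
       - (\<Sum>x\<in>states K. \<Sum>y\<in>states K - {x}. sqrt (\<theta> x) * sqrt (\<theta> y) * ?G x y * ?mb x)
       + (\<Sum>x\<in>states K. lam * ?rho x * \<nu> x)"
      unfolding F_def Jfun_def \<theta>_def Let_def by simp
    also have "\<dots> = (((\<Sum>x\<in>states K. ?q x * ?mb x) + (s\<^sup>2 - 1) * q * m)
        - ((\<Sum>x\<in>states K. ?q x * ?mb x) + 2 * (s - 1) * q * m)
        + lam * (1 / fact K + (s\<^sup>2 - 1) * ?rho z * m)) / Z"
      unfolding SA SB SC by (simp only: diff_divide_distrib add_divide_distrib)
    finally show ?thesis by (simp add: algebra_simps)
  qed
  have key: "(s\<^sup>2 - 1) * q * m - 2 * (s - 1) * q * m + lam * (1 / fact K + (s\<^sup>2 - 1) * ?rho z * m)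
      - lam / fact K * Z = m * (t\<^sup>2 * (q + c) + 2 * t * c)"
    unfolding s_def Z_def c_def by (simp add: algebra_simps power2_eq_square)
  have "m * (t\<^sup>2 * (q + c) + 2 * t * c) < 0" using m0 tneg by (simp add: mult_pos_neg)
  then have "F \<nu> < lam / fact K" unfolding Fv using Z0 key by (simp add: divide_less_eq)
  then have "\<exists>\<nu>\<in>prob_states K. F \<nu> < lam / fact K" using \<nu>P by blast
  moreover have ne: "prob_states K \<noteq> ({} :: ((nat \<Rightarrow> 'a) \<Rightarrow> real) set)" using \<nu>P by blast
  ultimately have "(INF \<nu>\<in>prob_states K. F \<nu>) < lam / fact K"
    using cINF_less_iff[OF ne bdd] by simp
  then show ?thesis unfolding F_def by simp
qed

end
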